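(* Let $R$ be a GCD-domain and let $a\in R$ be a non-zero element with $a\notin R^{\ast}$. Then the following conditions on $a$ are all equivalent: (ii) there exist $n\geqslant 0$ and $s_0,s_1,\dots,s_n\in\operatorname{Sqf} R$ such that $a=s_n^{2^n}s_{n-1}^{2^{n-1}}\cdots s_1^2s_0$; (iii) there exist $n\geqslant 1$, $s_1,\dots,s_n\in(\operatorname{Sqf} R)\setminus R^{\ast}$, integers $0\leqslant k_1<k_2<\dots<k_n$, and $c\in R^{\ast}$ such that $a=c\,s_n^{2^{k_n}}s_{n-1}^{2^{k_{n-1}}}\cdots s_1^{2^{k_1}}$; (iv) there exist $n\geqslant 1$ and $s_1,\dots,s_n\in\operatorname{Sqf} R$ such that $s_i\mid s_{i+1}$ for $i=1,\dots,n-1$ and $a=s_1s_2\cdots s_n$; (v) there exist $n\geqslant 1$, $s_1,\dots,s_n\in(\operatorname{Sqf} R)\setminus R^{\ast}$, integers $k_1,\dots,k_n\geqslant 1$, and $c\in R^{\ast}$ such that $s_i\mid s_{i+1}$ and $s_i\not\sim s_{i+1}$ for $i=1,\dots,n-1$, and $a=c\,s_1^{k_1}s_2^{k_2}\cdots s_n^{k_n}$; (vi) there exist $n\geqslant 1$ and $s_1,\dots,s_n\in\operatorname{Sqf} R$ such that $s_i$ and $s_j$ are relatively prime for $i\neq j$, and $a=s_1s_2^2s_3^3\cdots s_n^n$; (vii) there exist $n\geqslant 1$, $s_1,\dots,s_n\in(\operatorname{Sqf} R)\setminus R^{\ast}$, integers $1\leqslant k_1<k_2<\dots<k_n$, and $c\in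 R^{\ast}$ such that $s_i$ and $s_j$ are relatively prime for $i\neq j$, and $a=c\,s_1^{k_1}s_2^{k_2}\cdots s_n^{k_n}$.
   Context: A domain is a commutative ring with identity without zero divisors. A GCD-domain is a domain in which the intersection of any two principal ideals is principal. $R^{\ast}$ denotes the set of invertible elements of $R$. For $a,b\in R$, $a\sim b$ means $a$ and $b$ are associated, and $a\mid b$ means $a$ divides $b$. Elements $a,b$ are relatively prime if they have no common non-invertible divisor. An element $a\in R$ is square-free if it cannot be written as $a=b^2c$ with $b\in R\setminus R^{\ast}$ and $c\in R$; $\operatorname{Sqf} R$ denotes the set of square-free elements of $R$. *)

theory Defs
  imports Main
begin

text \<open>A GCD-domain: a domain (type class idom) in which the intersection of any two
principal ideals is principal, i.e. for all x, y there is m with xR \<inter> yR = mR.\<close>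
definition gcd_domain :: "'a::idom itself \<Rightarrow> bool" where
  "gcd_domain _ \<longleftrightarrow>
     (\<forall>x y :: 'a. \<exists>m. {z. x dvd z} \<inter> {z. y dvd z} = {z. m dvd z})"

definition Sqf :: "'a::idom set" where
  "Sqf = {a. \<not> (\<exists>b c. \<not> (b dvd 1) \<and> a = b ^ 2 * c)}"

definition assoc :: "'a::idom \<Rightarrow> 'a \<Rightarrow> bool" where
  "assoc x y \<longleftrightarrow> x dvd y \<and> y dvd x"

definition rel_prime :: "'a::idom \<Rightarrow> 'a \<Rightarrow> bool" where
  "rel_prime x y \<longleftrightarrow> (\<forall>d. d dvd x \<and> d dvd y \<longrightarrow> (d dvd 1))"

end

theory Submission
  imports Defs
begin


lemma sqf_nonzero: "x \<in> Sqf \<Longrightarrow> (x::'a::idom) \<noteq> 0"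
proof
  assume "x \<in> Sqf" "x = 0"
  moreover have "(0::'a) = 0^2 * 0" by simp
  moreover have "\<not> (0::'a) dvd 1" by simp
  ultimately show False unfolding Sqf_def by blast
qed

lemma sqf_dvd: assumes "x \<in> Sqf" "y dvd x" shows "(y::'a::idom) \<in> Sqf"
proof -
  from assms(2) obtain k where k: "x = y * k" by (auto elim: dvdE)
  show ?thesis unfolding Sqf_def
  proof (clarsimp)
    fix b c assume "\<not> b dvd 1" "y = b^2 * c"
    then have "x = b^2 * (c*k)" using k by (simp add: mult.assoc)
    with assms(1) \<open>\<not> b dvd 1\<close> show False unfolding Sqf_def by blast
  qed
qed

lemma sqfD: assumes "x \<in> Sqf" "b^2 dvd x" shows "(b::'a::idom) dvd 1"
  using assms unfolding Sqf_def dvd_def[of "b^2"] by blast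

lemma unit_sqf: assumes "(c::'a::idom) dvd 1" shows "c \<in> Sqf"
  unfolding Sqf_def
proof clarsimp
  fix b d assume "\<not> b dvd 1" "c = b^2 * d"
  then have "b dvd c" by (simp add: power2_eq_square mult.assoc)
  with assms \<open>\<not> b dvd 1\<close> show False using dvd_trans by blast
qed

lemma sqf_coprime_factors: assumes "x \<in> Sqf" "y * z dvd x" shows "rel_prime (y::'a::idom) z"
  unfolding rel_prime_def
proof clarify
  fix d assume "d dvd y" "d dvd z"
  then have "d^2 dvd y*z" by (simp add: power2_eq_square mult_dvd_mono)
  then have "d^2 dvd x" using assms(2) dvd_trans by blast
  then show "d dvd 1" using sqfD assms(1) by blast
qed

lemma lcm_ex: "gcd_domain TYPE('a::idom) \<Longrightarrow> \<exists>m::'a. \<forall>z. (x dvd z \<and> y dvd z) \<longleftrightarrow> m dvd z"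
  unfolding gcd_domain_def set_eq_iff by simp

lemma coprime_lcm:
  assumes G: "gcd_domain TYPE('a::idom)" and rp: "rel_prime x y" and nz: "(x::'a) \<noteq> 0" "y \<noteq> 0"
    and "x dvd w" "y dvd w"
  shows "x * y dvd w"
proof -
  obtain m where m: "\<And>z. (x dvd z \<and> y dvd z) \<longleftrightarrow> m dvd z" using lcm_ex[OF G] by blast
  have "m dvd x*y" using m[of "x*y"] by simp
  then obtain d where d: "x*y = m*d" by (auto elim: dvdE)
  have "x dvd m" using m[of m] by simp
  then obtain u where u: "m = x*u" by (auto elim: dvdE)
  have "y dvd m" using m[of m] by simp
  then obtain v where v: "m = y*v" by (auto elim: dvdE)
  have "x*y = x*(u*d)" using d u by (simp add: mult.assoc)
  then have "y = u*d" using nz by simp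
  have "x*y = y*(v*d)" using d v by (simp add: ac_simps)
  then have "x = v*d" using nz by simp
  have "d dvd x" "d dvd y" using \<open>y = u*d\<close> \<open>x = v*d\<close> by simp_all
  then have "d dvd 1" using rp unfolding rel_prime_def by blast
  then have "m*d dvd m*1" by (intro mult_dvd_mono) auto
  then have "x*y dvd m" using d by simp
  moreover have "m dvd w" using m[of w] assms(5,6) by simp
  ultimately show ?thesis by (rule dvd_trans)
qed

lemma euclid:
  assumes G: "gcd_domain TYPE('a::idom)" and rp: "rel_prime x y" and nz: "(x::'a) \<noteq> 0" "y \<noteq> 0"
    and "x dvd y * w"
  shows "x dvd w"
proof -
  have "x * y dvd y * w" using coprime_lcm[OF G rp nz] assms(5) by simp
  then have "y * x dvd y * w" by (simp add: mult.commute)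
  then show ?thesis using nz by simp
qed

lemma rel_prime_mult:
  assumes G: "gcd_domain TYPE('a::idom)" and "rel_prime x y" "rel_prime x z" "(x::'a) \<noteq> 0" "y \<noteq> 0"
  shows "rel_prime x (y*z)"
  unfolding rel_prime_def
proof clarify
  fix d assume d: "d dvd x" "d dvd y*z"
  have "d \<noteq> 0" using d(1) assms(4) by (metis dvd_0_left)
  have "rel_prime d y" unfolding rel_prime_def
  proof clarify
    fix e assume "e dvd d" "e dvd y"
    have "e dvd x" using \<open>e dvd d\<close> d(1) by (rule dvd_trans)
    then show "e dvd 1" using assms(2) \<open>e dvd y\<close> unfolding rel_prime_def by blast
  qed
  then have "d dvd z" by (rule euclid[OF G _ \<open>d \<noteq> 0\<close> assms(5) d(2)])
  then show "d dvd 1" using assms(3) d(1) unfolding rel_prime_def by blast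
qed

lemma sqf_mult:
  assumes G: "gcd_domain TYPE('a::idom)" and x: "(x::'a) \<in> Sqf" and y: "y \<in> Sqf" and rp: "rel_prime x y"
  shows "x * y \<in> Sqf"
  unfolding Sqf_def
proof clarsimp
  fix b c assume nb: "\<not> b dvd 1" and e: "x * y = b^2 * c"
  have x0: "x \<noteq> 0" and y0: "y \<noteq> 0" using x y sqf_nonzero by auto
  have b0: "b \<noteq> 0" using e x0 y0 by auto
  have rbx: "rel_prime b x" unfolding rel_prime_def
  proof clarify
    fix d assume "d dvd b" "d dvd x"
    then obtain b1 x1 where b1: "b = d*b1" and x1: "x = d*x1" by (auto elim!: dvdE)
    have d0: "d \<noteq> 0" using b0 b1 by auto
    have "d * (x1 * y) = d * (d*(b1^2*c))" using e b1 x1 by (simp add: power2_eq_square ac_simps)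
    then have "x1 * y = d * (b1^2*c)" using d0 by simp
    then have "d dvd y * x1" by (simp add: mult.commute)
    moreover have "rel_prime d y" unfolding rel_prime_def
    proof clarify
      fix e assume "e dvd d" "e dvd y"
      have "e dvd x" using \<open>e dvd d\<close> \<open>d dvd x\<close> by (rule dvd_trans)
      then show "e dvd 1" using rp \<open>e dvd y\<close> unfolding rel_prime_def by blast
    qed
    ultimately have "d dvd x1" using euclid[OF G _ d0 y0] by blast
    then have "d^2 dvd x" using x1 by (simp add: power2_eq_square)
    then show "d dvd 1" using sqfD x by blast
  qed
  have "b dvd x * y" using e by (simp add: power2_eq_square mult.assoc)
  then have "b dvd y" using euclid[OF G rbx b0 x0] by blast
  then obtain y1 where y1: "y = b * y1" by (auto elim: dvdE)
  have "b * (x * y1) = x * y" using y1 by (simp add: ac_simps)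
  also have "\<dots> = b * (b * c)" using e by (simp add: power2_eq_square mult.assoc)
  finally have "b * c = x * y1" using b0 by (metis mult_cancel_left)
  then have "b dvd x * y1" by (metis dvd_triv_left)
  then have "b dvd y1" using euclid[OF G rbx b0 x0] by blast
  then have "b^2 dvd y" using y1 by (simp add: power2_eq_square)
  then show False using sqfD y nb by blast
qed



lemma rp_of_dvd: "rel_prime x y \<Longrightarrow> d dvd x \<Longrightarrow> rel_prime d (y::'a::idom)"
  unfolding rel_prime_def
proof clarify
  fix e assume "\<forall>d. d dvd x \<and> d dvd y \<longrightarrow> d dvd 1" "d dvd x" "e dvd d" "e dvd y"
  moreover have "e dvd x" using \<open>e dvd d\<close> \<open>d dvd x\<close> by (rule dvd_trans)
  ultimately show "e dvd 1" by blast
qed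

lemma gl:
  assumes G: "gcd_domain TYPE('a::idom)" and x: "(x::'a) \<in> Sqf" and y: "y \<in> Sqf"
  shows "\<exists>g l. g \<in> Sqf \<and> l \<in> Sqf \<and> x*y = g*l \<and> g dvd x \<and> g dvd y \<and> x dvd l \<and> y dvd l \<and>
    (\<forall>d. d dvd x \<and> d dvd y \<longrightarrow> d dvd g)"
proof -
  have x0: "x \<noteq> 0" and y0: "y \<noteq> 0" using x y sqf_nonzero by auto
  obtain m where m: "\<And>z. (x dvd z \<and> y dvd z) \<longleftrightarrow> m dvd z" using lcm_ex[OF G] by blast
  have "m dvd x*y" using m[of "x*y"] by simp
  then obtain g where g: "x*y = m*g" by (auto elim: dvdE)
  have m0: "m \<noteq> 0" using g x0 y0 by auto
  have "x dvd m" using m[of m] by simp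
  then obtain u where u: "m = x*u" by (auto elim: dvdE)
  have "y dvd m" using m[of m] by simp
  then obtain v where v: "m = y*v" by (auto elim: dvdE)
  have "x*y = x*(u*g)" using g u by (simp add: mult.assoc)
  then have "y = u*g" using x0 by simp
  then have gy: "g dvd y" by simp
  have "x*y = y*(v*g)" using g v by (simp add: ac_simps)
  then have "x = v*g" using y0 by simp
  then have gx: "g dvd x" by simp
  have gmax: "\<forall>d. d dvd x \<and> d dvd y \<longrightarrow> d dvd g"
  proof clarify
    fix d assume "d dvd x" "d dvd y"
    then obtain x' y' where x': "x = d*x'" and y': "y = d*y'" by (auto elim!: dvdE)
    have "x dvd d*x'*y'" using x' by simp
    moreover have "y dvd d*x'*y'" using y' by (metis dvd_triv_left mult.assoc mult.commute)
    ultimately have "m dvd d*x'*y'" using m[of "d*x'*y'"] by simp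
    then obtain e where e: "d*x'*y' = m*e" by (auto elim: dvdE)
    have "m*g = m*(d*e)"
    proof -
      have "m*g = x*y" using g by simp
      also have "\<dots> = d*(d*x'*y')" using x' y' by (simp add: ac_simps)
      also have "\<dots> = m*(d*e)" using e by (simp add: ac_simps)
      finally show ?thesis .
    qed
    then have "g = d*e" using m0 by simp
    then show "d dvd g" by simp
  qed
  from gy obtain y1 where y1: "y = g*y1" by (auto elim: dvdE)
  have y1s: "y1 \<in> Sqf" using sqf_dvd[OF y] y1 by simp
  have rp: "rel_prime x y1" unfolding rel_prime_def
  proof clarify
    fix d assume d: "d dvd x" "d dvd y1"
    have "d dvd y" using d(2) y1 by simp
    then have "d dvd g" using gmax d(1) by blast
    then have "d^2 dvd y" using y1 d(2) by (simp add: power2_eq_square mult_dvd_mono)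
    then show "d dvd 1" using sqfD y by blast
  qed
  have ls: "x*y1 \<in> Sqf" using sqf_mult[OF G x y1s rp] .
  have "x*y = g*(x*y1)" using y1 by (simp add: ac_simps)
  moreover have "y dvd x*y1" using y1 gx by (simp add: mult_dvd_mono)
  moreover have "g \<in> Sqf" using sqf_dvd[OF x gx] .
  ultimately show ?thesis using ls gx gy gmax by (intro exI[of _ g] exI[of _ "x*y1"]) simp
qed

lemma ins:
  assumes G: "gcd_domain TYPE('a::idom)"
  shows "\<forall>x::'a. x \<in> Sqf \<longrightarrow> set L \<subseteq> Sqf \<longrightarrow> sorted_wrt (dvd) L \<longrightarrow>
    (\<exists>L'. set L' \<subseteq> Sqf \<and> sorted_wrt (dvd) L' \<and> prod_list L' = x * prod_list L \<and>
       (\<forall>d. d dvd x \<and> (\<forall>z\<in>set L. d dvd z) \<longrightarrow> (\<forall>w\<in>set L'. d dvd w)))"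
proof (induction L)
  case Nil
  show ?case by (intro allI impI exI[of _ "[_]"]) auto
next
  case (Cons s L)
  show ?case
  proof (intro allI impI)
    fix x :: 'a assume x: "x \<in> Sqf" and sL: "set (s # L) \<subseteq> Sqf" and so: "sorted_wrt (dvd) (s # L)"
    have s: "s \<in> Sqf" using sL by simp
    obtain g l where gl: "g \<in> Sqf" "l \<in> Sqf" "x*s = g*l" "g dvd x" "g dvd s" "x dvd l" "s dvd l"
      "\<forall>d. d dvd x \<and> d dvd s \<longrightarrow> d dvd g" using gl[OF G x s] by blast
    have sL': "set L \<subseteq> Sqf" "sorted_wrt (dvd) L" using sL so by simp_all
    obtain L'' where L'': "set L'' \<subseteq> Sqf" "sorted_wrt (dvd) L''" "prod_list L'' = l * prod_list L"
      "\<forall>d. d dvd l \<and> (\<forall>z\<in>set L. d dvd z) \<longrightarrow> (\<forall>w\<in>set L''. d dvd w)"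
      using Cons.IH[rule_format, OF gl(2) sL'] by blast
    have sdv: "\<forall>z\<in>set L. s dvd z" using so by simp
    have gdl: "g dvd l" using gl(4) gl(6) by (rule dvd_trans)
    have "\<forall>z\<in>set L. g dvd z"
    proof
      fix z assume "z \<in> set L"
      then have "s dvd z" using sdv by blast
      show "g dvd z" using gl(5) \<open>s dvd z\<close> by (rule dvd_trans)
    qed
    then have g1: "\<forall>w\<in>set L''. g dvd w" using L''(4) gdl by blast
    have inv: "\<forall>d. d dvd x \<and> (\<forall>z\<in>set (s#L). d dvd z) \<longrightarrow> (\<forall>w\<in>set (g#L''). d dvd w)"
    proof (intro allI impI)
      fix d assume d: "d dvd x \<and> (\<forall>z\<in>set (s#L). d dvd z)"
      have "d dvd x" using d by (rule conjunct1)
      have "d dvd s" using d by simp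
      have dg: "d dvd g" using gl(8) \<open>d dvd x\<close> \<open>d dvd s\<close> by blast
      have "d dvd l" using \<open>d dvd x\<close> gl(6) by (rule dvd_trans)
      have "\<forall>z\<in>set L. d dvd z" using d by (meson list.set_intros(2))
      then have "\<forall>w\<in>set L''. d dvd w" using L''(4) \<open>d dvd l\<close> by blast
      then show "\<forall>w\<in>set (g#L''). d dvd w" using dg by (metis set_ConsD)
    qed
    have "prod_list (g#L'') = x * prod_list (s#L)" using L''(3) gl(3) by (simp add: mult.assoc[symmetric])
    then show "\<exists>L'. set L' \<subseteq> Sqf \<and> sorted_wrt (dvd) L' \<and> prod_list L' = x * prod_list (s#L) \<and>
       (\<forall>d. d dvd x \<and> (\<forall>z\<in>set (s#L). d dvd z) \<longrightarrow> (\<forall>w\<in>set L'. d dvd w))"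
    proof (intro exI[of _ "g#L''"] conjI)
      show "set (g#L'') \<subseteq> Sqf" using gl(1) L''(1) by simp
      show "sorted_wrt (dvd) (g#L'')" using g1 L''(2) by simp
    qed (use inv in blast)+
  qed
qed

lemma sort_chain:
  assumes G: "gcd_domain TYPE('a::idom)"
  shows "set xs \<subseteq> Sqf \<Longrightarrow> \<exists>L. set L \<subseteq> Sqf \<and> sorted_wrt (dvd) L \<and> prod_list L = prod_list (xs::'a list)"
proof (induction xs)
  case Nil then show ?case by (intro exI[of _ "[]"]) simp
next
  case (Cons x xs)
  then obtain L where L: "set L \<subseteq> Sqf" "sorted_wrt (dvd) L" "prod_list L = prod_list xs" by auto
  have "x \<in> Sqf" using Cons.prems by simp
  then obtain L' where "set L' \<subseteq> Sqf" "sorted_wrt (dvd) L'" "prod_list L' = x * prod_list L"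
    using ins[OF G, of L, rule_format, OF \<open>x \<in> Sqf\<close> L(1) L(2)] by blast
  then show ?case using L(3) by (intro exI[of _ L']) simp
qed



definition PS :: "'a::idom \<Rightarrow> bool" where "PS x \<longleftrightarrow> (\<exists>xs. set xs \<subseteq> Sqf \<and> x = prod_list xs)"

lemma PS_sqf: "x \<in> Sqf \<Longrightarrow> PS x"
  unfolding PS_def by (intro exI[of _ "[x]"]) simp

lemma PS_one: "PS 1"
  unfolding PS_def by (intro exI[of _ "[]"]) simp

lemma PS_mult: "PS x \<Longrightarrow> PS y \<Longrightarrow> PS (x*y)"
  unfolding PS_def
proof (elim exE conjE)
  fix xs ys assume "set xs \<subseteq> Sqf" "x = prod_list xs" "set ys \<subseteq> Sqf" "y = prod_list ys"
  then show "\<exists>zs. set zs \<subseteq> Sqf \<and> x * y = prod_list zs" by (intro exI[of _ "xs@ys"]) simp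
qed

lemma PS_unit: "c dvd 1 \<Longrightarrow> PS c"
  by (rule PS_sqf, rule unit_sqf)

lemma PS_power: "PS x \<Longrightarrow> PS (x^k)"
  by (induction k) (simp_all add: PS_one PS_mult)

lemma PS_prod: "\<forall>i\<in>I. PS (f i) \<Longrightarrow> PS (prod f I)"
proof (induction I rule: infinite_finite_induct)
qed (simp_all add: PS_one PS_mult)

lemma prod_list_nth0: "prod_list L = (\<Prod>i<length L. L!i)"
  by (induction L) (simp_all del: prod.lessThan_Suc add: prod.lessThan_Suc_shift)

lemma prod_list_nth: "prod_list L = (\<Prod>i\<in>{1..length L}. L!(i-1))"
  by (simp add: prod_list_nth0 prod.atLeast1_atMost_eq)

lemma PS_C4:
  assumes G: "gcd_domain TYPE('a::idom)" and ps: "PS (a::'a)" and nu: "\<not> a dvd 1"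
  shows "\<exists>(n::nat) (s::nat \<Rightarrow> 'a). n \<ge> 1 \<and>
                  (\<forall>i\<in>{1..n}. s i \<in> Sqf) \<and>
                  (\<forall>i\<in>{1..<n}. s i dvd s (Suc i)) \<and>
                  a = (\<Prod>i\<in>{1..n}. s i)"
proof -
  obtain xs where xs: "set xs \<subseteq> Sqf" "a = prod_list xs" using ps unfolding PS_def by blast
  obtain L where L: "set L \<subseteq> Sqf" "sorted_wrt (dvd) L" "prod_list L = prod_list xs"
    using sort_chain[OF G xs(1)] by blast
  have "L \<noteq> []" using L(3) xs(2) nu by auto
  then have n1: "length L \<ge> 1" by (cases L) auto
  show ?thesis
  proof (intro exI[of _ "length L"] exI[of _ "\<lambda>i. L!(i-1)"] conjI n1 ballI)
    fix i assume "i \<in> {1..length L}"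
    then have "L!(i-1) \<in> set L" by auto
    then show "L!(i-1) \<in> Sqf" using L(1) by blast
  next
    fix i assume i: "i \<in> {1..<length L}"
    have "L!(i-1) dvd L!(Suc i - 1)"
      by (rule sorted_wrt_nth_less[OF L(2)]) (use i in auto)
    then show "L!(i-1) dvd L!(Suc i - 1)" .
  next
    show "a = (\<Prod>i\<in>{1..length L}. L!(i-1))" using xs(2) L(3) prod_list_nth[of L] by simp
  qed
qed



lemma prod_Suc1: "(\<Prod>i\<in>{1..Suc m}. f i) = (\<Prod>i\<in>{1..m}. f i) * (f (Suc m) :: 'a::comm_monoid_mult)"
  by (simp add: atLeastAtMostSuc_conv mult.commute)

lemma C4_C6:
  fixes s :: "nat \<Rightarrow> 'a::idom"
  assumes n1: "n \<ge> 1" and sq: "\<forall>i\<in>{1..n}. s i \<in> Sqf" and ch: "\<forall>i\<in>{1..<n}. s i dvd s (Suc i)"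
    and a: "a = (\<Prod>i\<in>{1..n}. s i)"
  shows "\<exists>(n::nat) (s::nat \<Rightarrow> 'a). n \<ge> 1 \<and>
                  (\<forall>i\<in>{1..n}. s i \<in> Sqf) \<and>
                  (\<forall>i\<in>{1..n}. \<forall>j\<in>{1..n}. i \<noteq> j \<longrightarrow> rel_prime (s i) (s j)) \<and>
                  a = (\<Prod>i\<in>{1..n}. s i ^ i)"
proof -
  obtain q where q: "\<forall>i\<in>{1..<n}. s (Suc i) = s i * q i"
    using bchoice[OF ch[unfolded dvd_def]] by blast
  define w where "w j = (if j = 0 then s 1 else q j)" for j
  have sw: "1 \<le> i \<longrightarrow> i \<le> n \<longrightarrow> s i = (\<Prod>j<i. w j)" for i
  proof (induction i)
    case 0 then show ?case by simp
  next
    case (Suc i)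
    show ?case
    proof (cases "i = 0")
      case True then show ?thesis by (simp add: w_def)
    next
      case False
      show ?thesis
      proof (intro impI)
        assume "Suc i \<le> n"
        then have "i \<in> {1..<n}" using False by simp
        then have "s (Suc i) = s i * q i" using q by blast
        also have "s i = (\<Prod>j<i. w j)" using Suc.IH False \<open>Suc i \<le> n\<close> by simp
        finally show "s (Suc i) = (\<Prod>j<Suc i. w j)" using False by (simp add: w_def)
      qed
    qed
  qed
  have tel: "(\<Prod>i\<in>{1..m}. \<Prod>j<i. w j) = (\<Prod>j<m. w j ^ (m - j))" for m
  proof (induction m)
    case 0 then show ?case by simp
  next
    case (Suc m)
    have e0: "(\<Prod>j<m. w j ^ (Suc m - j)) = (\<Prod>j<m. w j ^ (m - j) * w j)"
      by (rule prod.cong) (auto simp: Suc_diff_le)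
    have e1: "(\<Prod>j<Suc m. w j ^ (Suc m - j)) = (\<Prod>j<m. w j ^ (m - j)) * (\<Prod>j<m. w j) * w m"
      by (simp only: prod.lessThan_Suc e0 prod.distrib) simp
    have "(\<Prod>i\<in>{1..Suc m}. \<Prod>j<i. w j) = (\<Prod>j<m. w j ^ (m - j)) * ((\<Prod>j<m. w j) * w m)"
      using Suc.IH by (simp add: prod_Suc1)
    also have "\<dots> = (\<Prod>j<Suc m. w j ^ (Suc m - j))" unfolding e1 by (simp only: ac_simps)
    finally show ?case .
  qed
  have a2: "a = (\<Prod>j<n. w j ^ (n - j))"
  proof -
    have "a = (\<Prod>i\<in>{1..n}. \<Prod>j<i. w j)" unfolding a by (rule prod.cong) (use sw in auto)
    then show ?thesis using tel by simp
  qed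
  define u where "u i = w (n - i)" for i
  have a3: "a = (\<Prod>i\<in>{1..n}. u i ^ i)"
    unfolding a2
  proof (rule sym, rule prod.reindex_bij_witness[where i = "\<lambda>b. n - b" and j = "\<lambda>b. n - b"])
  qed (auto simp: u_def)
  have sn: "s n = (\<Prod>j<n. w j)" using sw n1 by simp
  have wsq: "w j \<in> Sqf" if "j < n" for j
  proof -
    have "w j dvd s n" unfolding sn using that by (intro dvd_prodI) auto
    moreover have "s n \<in> Sqf" using sq n1 by simp
    ultimately show ?thesis using sqf_dvd by blast
  qed
  have wrp: "rel_prime (w j) (w j')" if "j < n" "j' < n" "j \<noteq> j'" for j j'
  proof -
    have "prod w {j, j'} dvd s n" unfolding sn using that by (intro prod_dvd_prod_subset) auto
    then have "w j * w j' dvd s n" using that by simp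
    moreover have "s n \<in> Sqf" using sq n1 by simp
    ultimately show ?thesis using sqf_coprime_factors by blast
  qed
  show ?thesis
  proof (intro exI[of _ n] exI[of _ u] conjI n1 a3 ballI impI)
    fix i assume "i \<in> {1..n}" then show "u i \<in> Sqf" unfolding u_def by (intro wsq) auto
  next
    fix i j assume "i \<in> {1..n}" "j \<in> {1..n}" "i \<noteq> j"
    then show "rel_prime (u i) (u j)" unfolding u_def by (intro wrp) auto
  qed
qed



lemma rel_prime_one: "rel_prime x (1::'a::idom)"
  unfolding rel_prime_def by simp

lemma rel_prime_sym: "rel_prime x y \<Longrightarrow> rel_prime y (x::'a::idom)"
  unfolding rel_prime_def by blast

lemma rp_prod:
  assumes G: "gcd_domain TYPE('a::idom)" and x0: "(x::'a) \<noteq> 0"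
  shows "finite F \<Longrightarrow> (\<forall>j\<in>F. rel_prime x (f j) \<and> f j \<noteq> 0) \<Longrightarrow> rel_prime x (prod f F)"
proof (induction F rule: finite_induct)
  case empty then show ?case by (simp add: rel_prime_one)
next
  case (insert j F)
  have "rel_prime x (f j)" "f j \<noteq> 0" using insert.prems by simp_all
  moreover have "rel_prime x (prod f F)" using insert.IH insert.prems by simp
  ultimately show ?case using rel_prime_mult[OF G _ _ x0] insert.hyps by simp
qed

lemma sqf_prod:
  assumes G: "gcd_domain TYPE('a::idom)"
  shows "finite I \<Longrightarrow> (\<forall>i\<in>I. (f i::'a) \<in> Sqf) \<Longrightarrow> (\<forall>i\<in>I. \<forall>j\<in>I. i \<noteq> j \<longrightarrow> rel_prime (f i) (f j))
    \<Longrightarrow> prod f I \<in> Sqf"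
proof (induction I rule: finite_induct)
  case empty then show ?case by (simp add: unit_sqf)
next
  case (insert x F)
  have fx: "f x \<in> Sqf" using insert.prems by simp
  have pF: "prod f F \<in> Sqf" using insert.IH insert.prems by simp
  have "\<forall>j\<in>F. rel_prime (f x) (f j) \<and> f j \<noteq> 0"
  proof
    fix j assume j: "j \<in> F"
    then have "x \<noteq> j" using insert.hyps by auto
    then have "rel_prime (f x) (f j)" using insert.prems j by simp
    moreover have "f j \<noteq> 0" using insert.prems j by (intro sqf_nonzero) simp
    ultimately show "rel_prime (f x) (f j) \<and> f j \<noteq> 0" by simp
  qed
  then have "rel_prime (f x) (prod f F)" using rp_prod[OF G sqf_nonzero[OF fx] insert.hyps(1)] by simp
  then show ?case using sqf_mult[OF G fx pF] insert.hyps by simp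
qed

lemma binexp: "i < 2^N \<Longrightarrow> (\<Sum>k<N. (if odd (i div 2^k) then 2^k else (0::nat))) = (i::nat)"
proof (induction N arbitrary: i)
  case 0 then show ?case by simp
next
  case (Suc N)
  have h: "(if odd (i div 2^Suc k) then 2^Suc k else (0::nat)) = 2 * (if odd (i div 2 div 2^k) then 2^k else (0::nat))" for k
    by (simp add: div_mult2_eq)
  have "(\<Sum>k<Suc N. (if odd (i div 2^k) then 2^k else (0::nat))) =
      (if odd i then 1 else (0::nat)) + (\<Sum>k<N. (if odd (i div 2^Suc k) then 2^Suc k else (0::nat)))"
    by (simp add: sum.lessThan_Suc_shift del: sum.lessThan_Suc)
  also have "\<dots> = (if odd i then 1 else (0::nat)) + 2 * (\<Sum>k<N. (if odd (i div 2 div 2^k) then 2^k else (0::nat)))"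
    by (simp only: h sum_distrib_left)
  also have "(\<Sum>k<N. (if odd (i div 2 div 2^k) then 2^k else (0::nat))) = i div 2"
    using Suc.prems by (intro Suc.IH) simp
  finally show ?case by presburger
qed

lemma C6_C2:
  fixes u :: "nat \<Rightarrow> 'a::idom"
  assumes G: "gcd_domain TYPE('a)" and n1: "n \<ge> 1" and sq: "\<forall>i\<in>{1..n}. u i \<in> Sqf"
    and rp: "\<forall>i\<in>{1..n}. \<forall>j\<in>{1..n}. i \<noteq> j \<longrightarrow> rel_prime (u i) (u j)"
    and a: "a = (\<Prod>i\<in>{1..n}. u i ^ i)"
  shows "\<exists>(n::nat) (s::nat \<Rightarrow> 'a). (\<forall>i\<le>n. s i \<in> Sqf) \<and> a = (\<Prod>i\<le>n. s i ^ (2 ^ i))"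
proof -
  define v where "v k = (\<Prod>i\<in>{i\<in>{1..n}. odd (i div 2^k)}. u i)" for k
  have pw: "u i ^ i = (\<Prod>k\<le>n. (if odd (i div 2^k) then u i ^ 2^k else 1))" if "i \<in> {1..n}" for i
  proof -
    have "(2::nat)^n \<le> 2^Suc n" by (rule power_increasing) auto
    moreover have "i \<le> n" using that by simp
    moreover have "n < 2^n" by (rule less_exp)
    ultimately have "i < 2^Suc n" by linarith
    then have "(\<Sum>k<Suc n. (if odd (i div 2^k) then 2^k else (0::nat))) = i" by (rule binexp)
    then have "u i ^ i = u i ^ (\<Sum>k<Suc n. (if odd (i div 2^k) then 2^k else 0))" by simp
    also have "\<dots> = (\<Prod>k<Suc n. u i ^ (if odd (i div 2^k) then 2^k else 0))" by (rule power_sum)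
    also have "\<dots> = (\<Prod>k\<le>n. (if odd (i div 2^k) then u i ^ 2^k else 1))"
      unfolding lessThan_Suc_atMost by (rule prod.cong) auto
    finally show ?thesis .
  qed
  have "a = (\<Prod>i\<in>{1..n}. \<Prod>k\<le>n. (if odd (i div 2^k) then u i ^ 2^k else 1))"
    unfolding a by (rule prod.cong) (use pw in auto)
  also have "\<dots> = (\<Prod>k\<le>n. \<Prod>i\<in>{1..n}. (if odd (i div 2^k) then u i ^ 2^k else 1))"
    by (rule prod.swap)
  also have "\<dots> = (\<Prod>k\<le>n. v k ^ 2^k)"
  proof (rule prod.cong)
    fix k
    have "(\<Prod>i\<in>{1..n}. (if odd (i div 2^k) then u i ^ 2^k else 1)) = (\<Prod>i\<in>{i\<in>{1..n}. odd (i div 2^k)}. u i ^ 2^k)"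
      by (rule prod.inter_filter[symmetric]) simp
    also have "\<dots> = v k ^ 2^k" unfolding v_def by (rule prod_power_distrib[symmetric])
    finally show "(\<Prod>i\<in>{1..n}. (if odd (i div 2^k) then u i ^ 2^k else 1)) = v k ^ 2^k" .
  qed simp
  finally have a2: "a = (\<Prod>k\<le>n. v k ^ 2^k)" .
  have "v k \<in> Sqf" for k
    unfolding v_def by (rule sqf_prod[OF G]) (use sq rp in auto)
  then show ?thesis using a2 by blast
qed



lemma unit_mult': "a dvd 1 \<Longrightarrow> b dvd 1 \<Longrightarrow> (a*b::'a::comm_semiring_1) dvd 1"
  using mult_dvd_mono[of a 1 b 1] by simp

lemma unit_pow': "a dvd 1 \<Longrightarrow> (a::'a::comm_semiring_1)^k dvd 1"
  using dvd_power_same[of a 1 k] by simp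

lemma C2_C3_aux:
  fixes s :: "nat \<Rightarrow> 'a::idom"
  shows "(\<forall>i\<le>n. s i \<in> Sqf) \<Longrightarrow> \<exists>(m::nat) (t::nat \<Rightarrow> 'a) (k::nat \<Rightarrow> nat) c.
    (\<forall>i\<in>{1..m}. t i \<in> Sqf \<and> \<not> t i dvd 1 \<and> k i \<le> n) \<and> (\<forall>i\<in>{1..<m}. k i < k (Suc i)) \<and>
    c dvd 1 \<and> (\<Prod>i\<le>n. s i ^ 2^i) = c * (\<Prod>i\<in>{1..m}. t i ^ 2^k i)"
proof (induction n)
  case 0
  show ?case
  proof (cases "s 0 dvd 1")
    case True
    show ?thesis by (rule exI[of _ 0], rule exI[of _ "\<lambda>_. 0"], rule exI[of _ "\<lambda>_. 0"], rule exI[of _ "s 0"])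
      (use True in simp)
  next
    case False
    show ?thesis by (rule exI[of _ 1], rule exI[of _ "\<lambda>_. s 0"], rule exI[of _ "\<lambda>_. 0"], rule exI[of _ 1])
      (use False 0 in simp)
  qed
next
  case (Suc n)
  then obtain m t k c where IH: "\<forall>i\<in>{1..m}. t i \<in> Sqf \<and> \<not> t i dvd 1 \<and> k i \<le> n"
    "\<forall>i\<in>{1..<m}. k i < k (Suc i)" "c dvd 1" "(\<Prod>i\<le>n. s i ^ 2^i) = c * (\<Prod>i\<in>{1..m}. t i ^ 2^k i)"
    by auto
  have P: "(\<Prod>i\<le>Suc n. s i ^ 2^i) = c * (\<Prod>i\<in>{1..m}. t i ^ 2^k i) * s (Suc n) ^ 2^Suc n"
    using IH(4) by simp
  show ?case
  proof (cases "s (Suc n) dvd 1")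
    case True
    show ?thesis
    proof (rule exI[of _ m], rule exI[of _ t], rule exI[of _ k], rule exI[of _ "c * s (Suc n) ^ 2^Suc n"], intro conjI)
      show "\<forall>i\<in>{1..m}. t i \<in> Sqf \<and> \<not> t i dvd 1 \<and> k i \<le> Suc n" using IH(1) by (auto intro: le_SucI)
      show "c * s (Suc n) ^ 2 ^ Suc n dvd 1" using IH(3) True by (intro unit_mult' unit_pow')
    qed (use IH(2) P in \<open>simp_all add: ac_simps\<close>)
  next
    case False
    define t' where "t' = t(Suc m := s (Suc n))"
    define k' where "k' = k(Suc m := Suc n)"
    have eqp: "(\<Prod>i\<in>{1..m}. t' i ^ 2^k' i) = (\<Prod>i\<in>{1..m}. t i ^ 2^k i)"
      by (rule prod.cong) (auto simp: t'_def k'_def)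
    show ?thesis
    proof (rule exI[of _ "Suc m"], rule exI[of _ t'], rule exI[of _ k'], rule exI[of _ c], intro conjI)
      show "\<forall>i\<in>{1..Suc m}. t' i \<in> Sqf \<and> \<not> t' i dvd 1 \<and> k' i \<le> Suc n"
        using IH(1) False Suc.prems by (auto simp: t'_def k'_def intro: le_SucI)
      show "\<forall>i\<in>{1..<Suc m}. k' i < k' (Suc i)"
      proof
        fix i assume i: "i \<in> {1..<Suc m}"
        show "k' i < k' (Suc i)"
        proof (cases "i = m")
          case True
          then have "k i \<le> n" using IH(1) i by auto
          then show ?thesis using True by (simp add: k'_def)
        next
          case False
          then show ?thesis using IH(2) i by (simp add: k'_def)
        qed
      qed
      show "(\<Prod>i\<le>Suc n. s i ^ 2^i) = c * (\<Prod>i\<in>{1..Suc m}. t' i ^ 2^k' i)"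
        unfolding P prod_Suc1 eqp by (simp add: t'_def k'_def ac_simps)
    qed (use IH(3) in simp)
  qed
qed

lemma C6_C7_aux:
  fixes u :: "nat \<Rightarrow> 'a::idom"
  shows "(\<forall>i\<in>{1..n}. u i \<in> Sqf) \<Longrightarrow> \<exists>(m::nat) (t::nat \<Rightarrow> 'a) (k::nat \<Rightarrow> nat) c.
    (\<forall>i\<in>{1..m}. t i \<in> Sqf \<and> \<not> t i dvd 1 \<and> t i = u (k i) \<and> k i \<in> {1..n}) \<and> (\<forall>i\<in>{1..<m}. k i < k (Suc i)) \<and>
    c dvd 1 \<and> (\<Prod>i\<in>{1..n}. u i ^ i) = c * (\<Prod>i\<in>{1..m}. t i ^ k i)"
proof (induction n)
  case 0
  show ?case by (rule exI[of _ 0], rule exI[of _ "\<lambda>_. 0"], rule exI[of _ "\<lambda>_. 0"], rule exI[of _ 1]) simp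
next
  case (Suc n)
  then obtain m t k c where IH: "\<forall>i\<in>{1..m}. t i \<in> Sqf \<and> \<not> t i dvd 1 \<and> t i = u (k i) \<and> k i \<in> {1..n}"
    "\<forall>i\<in>{1..<m}. k i < k (Suc i)" "c dvd 1" "(\<Prod>i\<in>{1..n}. u i ^ i) = c * (\<Prod>i\<in>{1..m}. t i ^ k i)"
    by auto
  have P: "(\<Prod>i\<in>{1..Suc n}. u i ^ i) = c * (\<Prod>i\<in>{1..m}. t i ^ k i) * u (Suc n) ^ Suc n"
    using IH(4) by (simp only: prod_Suc1)
  show ?case
  proof (cases "u (Suc n) dvd 1")
    case True
    show ?thesis
    proof (rule exI[of _ m], rule exI[of _ t], rule exI[of _ k], rule exI[of _ "c * u (Suc n) ^ Suc n"], intro conjI)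
      show "\<forall>i\<in>{1..m}. t i \<in> Sqf \<and> \<not> t i dvd 1 \<and> t i = u (k i) \<and> k i \<in> {1..Suc n}" using IH(1) by auto
      show "c * u (Suc n) ^ Suc n dvd 1" using IH(3) True by (intro unit_mult' unit_pow')
    qed (use IH(2) P in \<open>simp_all add: ac_simps\<close>)
  next
    case False
    define t' where "t' = t(Suc m := u (Suc n))"
    define k' where "k' = k(Suc m := Suc n)"
    have eqp: "(\<Prod>i\<in>{1..m}. t' i ^ k' i) = (\<Prod>i\<in>{1..m}. t i ^ k i)"
      by (rule prod.cong) (auto simp: t'_def k'_def)
    show ?thesis
    proof (rule exI[of _ "Suc m"], rule exI[of _ t'], rule exI[of _ k'], rule exI[of _ c], intro conjI)
      show "\<forall>i\<in>{1..Suc m}. t' i \<in> Sqf \<and> \<not> t' i dvd 1 \<and> t' i = u (k' i) \<and> k' i \<in> {1..Suc n}"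
      proof
        fix i assume i: "i \<in> {1..Suc m}"
        show "t' i \<in> Sqf \<and> \<not> t' i dvd 1 \<and> t' i = u (k' i) \<and> k' i \<in> {1..Suc n}"
        proof (cases "i = Suc m")
          case True then show ?thesis using False Suc.prems by (simp add: t'_def k'_def)
        next
          case F: False
          then have "i \<in> {1..m}" using i by simp
          then have h: "t i \<in> Sqf \<and> \<not> t i dvd 1 \<and> t i = u (k i) \<and> k i \<in> {1..n}" using IH(1) by blast
          have "t' i = t i" "k' i = k i" using F by (simp_all add: t'_def k'_def)
          then show ?thesis using h by auto
        qed
      qed
      show "\<forall>i\<in>{1..<Suc m}. k' i < k' (Suc i)"
      proof
        fix i assume i: "i \<in> {1..<Suc m}"
        show "k' i < k' (Suc i)"
        proof (cases "i = m")
          case True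
          then have "k i \<le> n" using IH(1) i by auto
          then show ?thesis using True by (simp add: k'_def)
        next
          case False
          then show ?thesis using IH(2) i by (simp add: k'_def)
        qed
      qed
      have "(\<Prod>i\<in>{1..Suc m}. t' i ^ k' i) = (\<Prod>i\<in>{1..m}. t i ^ k i) * u (Suc n) ^ Suc n"
        by (simp only: prod_Suc1 eqp) (simp add: t'_def k'_def)
      then show "(\<Prod>i\<in>{1..Suc n}. u i ^ i) = c * (\<Prod>i\<in>{1..Suc m}. t' i ^ k' i)"
        using P by (simp only: ac_simps)
    qed (use IH(3) in simp)
  qed
qed

lemma inc_mono: "(\<forall>i\<in>{1..<m}. k i < k (Suc i)) \<Longrightarrow> 1 \<le> i \<Longrightarrow> i < j \<Longrightarrow> j \<le> m \<Longrightarrow> k i < (k j::nat)"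
proof (induction j)
  case 0 then show ?case by simp
next
  case (Suc j)
  show ?case
  proof (cases "i = j")
    case True then show ?thesis using Suc.prems by auto
  next
    case False
    then have "k i < k j" using Suc by auto
    moreover have "k j < k (Suc j)" using Suc.prems False by auto
    ultimately show ?thesis by simp
  qed
qed



lemma assoc_unit: assumes "(x::'a::idom) \<noteq> 0" "assoc x y" shows "\<exists>e. e dvd 1 \<and> y = x * e"
proof -
  obtain e where e: "y = x * e" using assms(2) unfolding assoc_def by (auto elim: dvdE)
  obtain f where f: "x = y * f" using assms(2) unfolding assoc_def by (auto elim: dvdE)
  have "x * 1 = x * (e * f)" using e f by (metis mult.assoc mult_1_right mult.commute)
  then have "e * f = 1" using assms(1) by (metis mult_cancel_left)
  then have "e dvd 1" by (metis dvd_triv_left)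
  then show ?thesis using e by blast
qed

lemma C4_C5_aux:
  fixes s :: "nat \<Rightarrow> 'a::idom"
  assumes sq: "\<forall>i\<in>{1..N}. s i \<in> Sqf" and ch: "\<forall>i\<in>{1..<N}. s i dvd s (Suc i)"
  shows "n \<le> N \<Longrightarrow> \<exists>(m::nat) (t::nat \<Rightarrow> 'a) (k::nat \<Rightarrow> nat) c. m \<le> n \<and>
    (\<forall>i\<in>{1..m}. t i \<in> Sqf \<and> \<not> t i dvd 1 \<and> k i \<ge> 1) \<and>
    (\<forall>i\<in>{1..<m}. t i dvd t (Suc i) \<and> \<not> assoc (t i) (t (Suc i))) \<and>
    c dvd 1 \<and> (\<Prod>i\<in>{1..n}. s i) = c * (\<Prod>i\<in>{1..m}. t i ^ k i) \<and>
    (m = 0 \<longrightarrow> n \<ge> 1 \<longrightarrow> s n dvd 1) \<and> (m \<ge> 1 \<longrightarrow> assoc (t m) (s n))"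
proof (induction n)
  case 0
  show ?case by (rule exI[of _ 0], rule exI[of _ "\<lambda>_. 0"], rule exI[of _ "\<lambda>_. 0"], rule exI[of _ 1]) simp
next
  case (Suc n)
  then obtain m t k c where IH: "m \<le> n" "\<forall>i\<in>{1..m}. t i \<in> Sqf \<and> \<not> t i dvd 1 \<and> k i \<ge> 1"
    "\<forall>i\<in>{1..<m}. t i dvd t (Suc i) \<and> \<not> assoc (t i) (t (Suc i))"
    "c dvd 1" "(\<Prod>i\<in>{1..n}. s i) = c * (\<Prod>i\<in>{1..m}. t i ^ k i)"
    "m = 0 \<longrightarrow> n \<ge> 1 \<longrightarrow> s n dvd 1" "m \<ge> 1 \<longrightarrow> assoc (t m) (s n)"
    by auto
  have sS: "s (Suc n) \<in> Sqf" using sq Suc.prems by simp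
  have chn: "s n dvd s (Suc n)" if "n \<ge> 1" using ch Suc.prems that by simp
  have P: "(\<Prod>i\<in>{1..Suc n}. s i) = c * (\<Prod>i\<in>{1..m}. t i ^ k i) * s (Suc n)"
    using IH(5) by (simp only: prod_Suc1)
  show ?case
  proof (cases "s (Suc n) dvd 1")
    case True
    have m0: "m = 0"
    proof (rule ccontr)
      assume "m \<noteq> 0"
      then have "m \<ge> 1" "n \<ge> 1" using IH(1) by auto
      then have "t m dvd s n" using IH(7) unfolding assoc_def by blast
      also have "s n dvd s (Suc n)" using chn \<open>n \<ge> 1\<close> by blast
      also have "s (Suc n) dvd 1" by (rule True)
      finally have "t m dvd 1" .
      then show False using IH(2) \<open>m \<ge> 1\<close> by auto
    qed
    show ?thesis
      by (rule exI[of _ 0], rule exI[of _ t], rule exI[of _ k], rule exI[of _ "c * s (Suc n)"])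
        (use m0 P True IH(4) unit_mult' in simp)
  next
    case False
    note nu = False
    show ?thesis
    proof (cases "m = 0")
      case True
      show ?thesis
        by (rule exI[of _ 1], rule exI[of _ "\<lambda>_. s (Suc n)"], rule exI[of _ "\<lambda>_. 1"], rule exI[of _ c])
          (use True P nu sS IH(4) in \<open>simp add: assoc_def\<close>)
    next
      case False
      then obtain m0 where m0: "m = Suc m0" by (cases m) auto
      have tm: "t m \<in> Sqf" "\<not> t m dvd 1" "k m \<ge> 1" using IH(2) m0 by auto
      have tm0: "t m \<noteq> 0" using sqf_nonzero tm(1) by blast
      show ?thesis
      proof (cases "assoc (t m) (s (Suc n))")
        case True
        then obtain e where e: "e dvd 1" "s (Suc n) = t m * e" using assoc_unit[OF tm0] by blast
        define k' where "k' = k(m := Suc (k m))"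
        have p1: "(\<Prod>i\<in>{1..m}. t i ^ k' i) = (\<Prod>i\<in>{1..m0}. t i ^ k i) * t m ^ Suc (k m)"
        proof -
          have "(\<Prod>i\<in>{1..m0}. t i ^ k' i) = (\<Prod>i\<in>{1..m0}. t i ^ k i)"
            by (rule prod.cong) (auto simp: k'_def m0)
          then show ?thesis unfolding m0 prod_Suc1 by (simp add: k'_def m0)
        qed
        have p2: "(\<Prod>i\<in>{1..m}. t i ^ k i) = (\<Prod>i\<in>{1..m0}. t i ^ k i) * t m ^ k m"
          unfolding m0 prod_Suc1 ..
        show ?thesis
        proof (rule exI[of _ m], rule exI[of _ t], rule exI[of _ k'], rule exI[of _ "c * e"], intro conjI)
          show "\<forall>i\<in>{1..m}. t i \<in> Sqf \<and> \<not> t i dvd 1 \<and> k' i \<ge> 1" using IH(2) by (auto simp: k'_def)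
          show "c * e dvd 1" using IH(4) e(1) by (rule unit_mult')
          show "(\<Prod>i\<in>{1..Suc n}. s i) = c * e * (\<Prod>i\<in>{1..m}. t i ^ k' i)"
            unfolding P p1 p2 e(2) by (simp add: ac_simps)
        qed (use IH(1) IH(3) True m0 in auto)
      next
        case False
        define t' where "t' = t(Suc m := s (Suc n))"
        define k' where "k' = k(Suc m := 1)"
        have eqp: "(\<Prod>i\<in>{1..m}. t' i ^ k' i) = (\<Prod>i\<in>{1..m}. t i ^ k i)"
          by (rule prod.cong) (auto simp: t'_def k'_def)
        have n1: "n \<ge> 1" using IH(1) m0 by simp
        have "t m dvd s n" using IH(7) m0 unfolding assoc_def by simp
        then have tmS: "t m dvd s (Suc n)" using chn[OF n1] by (rule dvd_trans)
        show ?thesis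
        proof (rule exI[of _ "Suc m"], rule exI[of _ t'], rule exI[of _ k'], rule exI[of _ c], intro conjI)
          show "Suc m \<le> Suc n" using IH(1) by simp
          show "\<forall>i\<in>{1..Suc m}. t' i \<in> Sqf \<and> \<not> t' i dvd 1 \<and> k' i \<ge> 1"
          proof
            fix i assume i: "i \<in> {1..Suc m}"
            show "t' i \<in> Sqf \<and> \<not> t' i dvd 1 \<and> k' i \<ge> 1"
            proof (cases "i = Suc m")
              case True then show ?thesis using nu sS by (simp add: t'_def k'_def)
            next
              case F: False
              then have "i \<in> {1..m}" using i by simp
              then have h: "t i \<in> Sqf \<and> \<not> t i dvd 1 \<and> k i \<ge> 1" using IH(2) by blast
              have "t' i = t i" "k' i = k i" using F by (simp_all add: t'_def k'_def)
              then show ?thesis using h by simp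
            qed
          qed
          show "\<forall>i\<in>{1..<Suc m}. t' i dvd t' (Suc i) \<and> \<not> assoc (t' i) (t' (Suc i))"
          proof
            fix i assume i: "i \<in> {1..<Suc m}"
            show "t' i dvd t' (Suc i) \<and> \<not> assoc (t' i) (t' (Suc i))"
            proof (cases "i = m")
              case True then show ?thesis using tmS False by (simp add: t'_def)
            next
              case F: False
              then have "i \<in> {1..<m}" using i by simp
              then have h: "t i dvd t (Suc i) \<and> \<not> assoc (t i) (t (Suc i))" using IH(3) by blast
              have "t' i = t i" "t' (Suc i) = t (Suc i)" using F i by (simp_all add: t'_def)
              then show ?thesis using h by simp
            qed
          qed
          have "(\<Prod>i\<in>{1..Suc m}. t' i ^ k' i) = (\<Prod>i\<in>{1..m}. t i ^ k i) * s (Suc n)"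
            by (simp only: prod_Suc1 eqp) (simp add: t'_def k'_def)
          then show "(\<Prod>i\<in>{1..Suc n}. s i) = c * (\<Prod>i\<in>{1..Suc m}. t' i ^ k' i)"
            using P by (simp only: ac_simps)
          show "Suc m \<ge> 1 \<longrightarrow> assoc (t' (Suc m)) (s (Suc n))" by (simp add: t'_def assoc_def)
        qed (use IH(4) in simp_all)
      qed
    qed
  qed
qed



theorem proposition1:
  fixes a :: "'a::idom"
  assumes "gcd_domain TYPE('a)"
    and "a \<noteq> 0" and "\<not> (a dvd 1)"
  defines "C2 \<equiv> (\<exists>(n::nat) (s::nat \<Rightarrow> 'a). (\<forall>i\<le>n. s i \<in> Sqf) \<and>
                  a = (\<Prod>i\<le>n. s i ^ (2 ^ i)))"
    and "C3 \<equiv> (\<exists>(n::nat) (s::nat \<Rightarrow> 'a) (k::nat \<Rightarrow> nat) c. n \<ge> 1 \<and>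
                  (\<forall>i\<in>{1..n}. s i \<in> Sqf \<and> \<not> (s i dvd 1)) \<and>
                  (\<forall>i\<in>{1..<n}. k i < k (Suc i)) \<and> (c dvd 1) \<and>
                  a = c * (\<Prod>i\<in>{1..n}. s i ^ (2 ^ k i)))"
    and "C4 \<equiv> (\<exists>(n::nat) (s::nat \<Rightarrow> 'a). n \<ge> 1 \<and>
                  (\<forall>i\<in>{1..n}. s i \<in> Sqf) \<and>
                  (\<forall>i\<in>{1..<n}. s i dvd s (Suc i)) \<and>
                  a = (\<Prod>i\<in>{1..n}. s i))"
    and "C5 \<equiv> (\<exists>(n::nat) (s::nat \<Rightarrow> 'a) (k::nat \<Rightarrow> nat) c. n \<ge> 1 \<and>
                  (\<forall>i\<in>{1..n}. s i \<in> Sqf \<and> \<not> (s i dvd 1) \<and> k i \<ge> 1) \<and>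
                  (\<forall>i\<in>{1..<n}. s i dvd s (Suc i) \<and> \<not> assoc (s i) (s (Suc i))) \<and>
                  (c dvd 1) \<and>
                  a = c * (\<Prod>i\<in>{1..n}. s i ^ k i))"
    and "C6 \<equiv> (\<exists>(n::nat) (s::nat \<Rightarrow> 'a). n \<ge> 1 \<and>
                  (\<forall>i\<in>{1..n}. s i \<in> Sqf) \<and>
                  (\<forall>i\<in>{1..n}. \<forall>j\<in>{1..n}. i \<noteq> j \<longrightarrow> rel_prime (s i) (s j)) \<and>
                  a = (\<Prod>i\<in>{1..n}. s i ^ i))"
    and "C7 \<equiv> (\<exists>(n::nat) (s::nat \<Rightarrow> 'a) (k::nat \<Rightarrow> nat) c. n \<ge> 1 \<and>
                  (\<forall>i\<in>{1..n}. s i \<in> Sqf \<and> \<not> (s i dvd 1)) \<and>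
                  1 \<le> k 1 \<and> (\<forall>i\<in>{1..<n}. k i < k (Suc i)) \<and>
                  (\<forall>i\<in>{1..n}. \<forall>j\<in>{1..n}. i \<noteq> j \<longrightarrow> rel_prime (s i) (s j)) \<and>
                  (c dvd 1) \<and>
                  a = c * (\<Prod>i\<in>{1..n}. s i ^ k i))"
  shows "(C2 \<longleftrightarrow> C3) \<and> (C2 \<longleftrightarrow> C4) \<and> (C2 \<longleftrightarrow> C5) \<and>
         (C2 \<longleftrightarrow> C6) \<and> (C2 \<longleftrightarrow> C7)"
proof -
  note G = assms(1)
  have sqfPS: "\<And>x. x \<in> Sqf \<Longrightarrow> PS x" by (rule PS_sqf)
  have c2p: "PS a" if C2
  proof -
    from that obtain n s where h: "\<forall>i\<le>n. s i \<in> Sqf" "a = (\<Prod>i\<le>n. s i ^ (2 ^ i))" unfolding C2_def by blast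
    show ?thesis unfolding h(2) by (intro PS_prod ballI PS_power PS_sqf) (use h(1) in simp)
  qed
  have c3p: "PS a" if C3
  proof -
    from that obtain n s k c where h: "\<forall>i\<in>{1..n::nat}. s i \<in> Sqf \<and> \<not> (s i dvd 1)" "c dvd 1"
      "a = c * (\<Prod>i\<in>{1..n}. s i ^ (2 ^ k i))" unfolding C3_def by blast
    show ?thesis unfolding h(3) by (intro PS_mult PS_unit h(2) PS_prod ballI PS_power PS_sqf) (use h(1) in simp)
  qed
  have c4p: "PS a" if C4
  proof -
    from that obtain n s where h: "\<forall>i\<in>{1..n::nat}. s i \<in> Sqf" "a = (\<Prod>i\<in>{1..n}. s i)" unfolding C4_def by blast
    show ?thesis unfolding h(2) by (intro PS_prod ballI PS_sqf) (use h(1) in simp)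
  qed
  have c5p: "PS a" if C5
  proof -
    from that obtain n s k c where h: "\<forall>i\<in>{1..n::nat}. s i \<in> Sqf \<and> \<not> (s i dvd 1) \<and> k i \<ge> 1" "c dvd 1"
      "a = c * (\<Prod>i\<in>{1..n}. s i ^ k i)" unfolding C5_def by blast
    show ?thesis unfolding h(3) by (intro PS_mult PS_unit h(2) PS_prod ballI PS_power PS_sqf) (use h(1) in simp)
  qed
  have c6p: "PS a" if C6
  proof -
    from that obtain n s where h: "\<forall>i\<in>{1..n::nat}. s i \<in> Sqf" "a = (\<Prod>i\<in>{1..n}. s i ^ i)" unfolding C6_def by blast
    show ?thesis unfolding h(2) by (intro PS_prod ballI PS_power PS_sqf) (use h(1) in simp)
  qed
  have c7p: "PS a" if C7
  proof -
    from that obtain n s k c where h: "\<forall>i\<in>{1..n::nat}. s i \<in> Sqf \<and> \<not> (s i dvd 1)" "c dvd 1"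
      "a = c * (\<Prod>i\<in>{1..n}. s i ^ k i)" unfolding C7_def by blast
    show ?thesis unfolding h(3) by (intro PS_mult PS_unit h(2) PS_prod ballI PS_power PS_sqf) (use h(1) in simp)
  qed
  have p4: C4 if "PS a" unfolding C4_def by (rule PS_C4[OF G that assms(3)])
  have c46: C6 if C4
  proof -
    from that obtain n s where "n \<ge> 1" "\<forall>i\<in>{1..n}. s i \<in> Sqf" "\<forall>i\<in>{1..<n}. s i dvd s (Suc i)"
      "a = (\<Prod>i\<in>{1..n}. s i)" unfolding C4_def by blast
    then show ?thesis unfolding C6_def by (rule C4_C6)
  qed
  have c62: C2 if C6
  proof -
    from that obtain n s where "n \<ge> 1" "\<forall>i\<in>{1..n}. s i \<in> Sqf"
      "\<forall>i\<in>{1..n}. \<forall>j\<in>{1..n}. i \<noteq> j \<longrightarrow> rel_prime (s i) (s j)"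
      "a = (\<Prod>i\<in>{1..n}. s i ^ i)" unfolding C6_def by blast
    then show ?thesis unfolding C2_def by (rule C6_C2[OF G])
  qed
  have c23: C3 if C2
  proof -
    from that obtain n s where ns: "\<forall>i\<le>n. s i \<in> Sqf" "a = (\<Prod>i\<le>n. s i ^ (2 ^ i))"
      unfolding C2_def by blast
    obtain m t k c where mt: "\<forall>i\<in>{1..m}. t i \<in> Sqf \<and> \<not> t i dvd 1 \<and> k i \<le> n"
      "\<forall>i\<in>{1..<m}. k i < k (Suc i)" "c dvd 1" "(\<Prod>i\<le>n. s i ^ 2^i) = c * (\<Prod>i\<in>{1..m}. t i ^ 2^k i)"
      using C2_C3_aux[OF ns(1)] by blast
    have "m \<ge> 1"
    proof (rule ccontr)
      assume "\<not> m \<ge> 1"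
      then have "a = c" using mt(4) ns(2) by simp
      then show False using mt(3) assms(3) by simp
    qed
    then show ?thesis unfolding C3_def using mt ns(2) by blast
  qed
  have c45: C5 if C4
  proof -
    from that obtain n s where ns: "n \<ge> 1" "\<forall>i\<in>{1..n}. s i \<in> Sqf" "\<forall>i\<in>{1..<n}. s i dvd s (Suc i)"
      "a = (\<Prod>i\<in>{1..n}. s i)" unfolding C4_def by blast
    obtain m t k c where mt: "\<forall>i\<in>{1..m}. t i \<in> Sqf \<and> \<not> t i dvd 1 \<and> k i \<ge> 1"
      "\<forall>i\<in>{1..<m}. t i dvd t (Suc i) \<and> \<not> assoc (t i) (t (Suc i))"
      "c dvd 1" "(\<Prod>i\<in>{1..n}. s i) = c * (\<Prod>i\<in>{1..m}. t i ^ k i)"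
      using C4_C5_aux[OF ns(2) ns(3) order.refl] by blast
    have "m \<ge> 1"
    proof (rule ccontr)
      assume "\<not> m \<ge> 1"
      then have "a = c" using mt(4) ns(4) by simp
      then show False using mt(3) assms(3) by simp
    qed
    then show ?thesis unfolding C5_def using mt ns(4) by blast
  qed
  have c67: C7 if C6
  proof -
    from that obtain n u where ns: "n \<ge> 1" "\<forall>i\<in>{1..n}. u i \<in> Sqf"
      "\<forall>i\<in>{1..n}. \<forall>j\<in>{1..n}. i \<noteq> j \<longrightarrow> rel_prime (u i) (u j)"
      "a = (\<Prod>i\<in>{1..n}. u i ^ i)" unfolding C6_def by blast
    obtain m t k c where mt: "\<forall>i\<in>{1..m}. t i \<in> Sqf \<and> \<not> t i dvd 1 \<and> t i = u (k i) \<and> k i \<in> {1..n}"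
      "\<forall>i\<in>{1..<m}. k i < k (Suc i)" "c dvd 1" "(\<Prod>i\<in>{1..n}. u i ^ i) = c * (\<Prod>i\<in>{1..m}. t i ^ k i)"
      using C6_C7_aux[OF ns(2)] by blast
    have m1: "m \<ge> 1"
    proof (rule ccontr)
      assume "\<not> m \<ge> 1"
      then have "a = c" using mt(4) ns(4) by simp
      then show False using mt(3) assms(3) by simp
    qed
    have k1: "1 \<le> k 1" using mt(1) m1 by auto
    have rp: "\<forall>i\<in>{1..m}. \<forall>j\<in>{1..m}. i \<noteq> j \<longrightarrow> rel_prime (t i) (t j)"
    proof (intro ballI impI)
      fix i j assume i: "i \<in> {1..m}" and j: "j \<in> {1..m}" and ij: "i \<noteq> j"
      have "k i \<noteq> k j"
      proof (cases "i < j")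
        case True
        then have "k i < k j" using inc_mono[OF mt(2)] i j by auto
        then show ?thesis by simp
      next
        case False
        then have "j < i" using ij by simp
        then have "k j < k i" using inc_mono[OF mt(2)] i j by auto
        then show ?thesis by simp
      qed
      moreover have "t i = u (k i)" "k i \<in> {1..n}" using mt(1) i by auto
      moreover have "t j = u (k j)" "k j \<in> {1..n}" using mt(1) j by auto
      ultimately show "rel_prime (t i) (t j)" using ns(3) by simp
    qed
    have "\<forall>i\<in>{1..m}. t i \<in> Sqf \<and> \<not> t i dvd 1" using mt(1) by blast
    then show ?thesis unfolding C7_def using m1 k1 mt(2,3,4) rp ns(4) by blast
  qed
  have e2: "C2 \<longleftrightarrow> PS a" using c2p p4 c46 c62 by blast
  have "C3 \<longleftrightarrow> PS a" using c3p p4 c46 c62 c23 by blast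
  moreover have "C4 \<longleftrightarrow> PS a" using c4p p4 by blast
  moreover have "C5 \<longleftrightarrow> PS a" using c5p p4 c45 by blast
  moreover have "C6 \<longleftrightarrow> PS a" using c6p p4 c46 by blast
  moreover have "C7 \<longleftrightarrow> PS a" using c7p p4 c46 c67 by blast
  ultimately show ?thesis using e2 by blast
qed


end
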